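(* Let $n>1$ be an odd integer. If a $(K_2,K_{1,n})$-$URD(v;1,s)$ exists, then $v \equiv 2(n+1) \pmod{n(n+1)}$ and, writing $v=n(n+1)k+2(n+1)$, $s=\frac{((n+1)k+2)(n+1)}{2}$.
   Context: For graphs $H_1,H_2$, an $(H_1,H_2)$-$URD(v;r,s)$ is a decomposition of the edge set of the complete graph $K_v$ into edge-disjoint subgraphs (blocks), where the blocks are partitioned into $r+s$ classes, each class being a spanning collection of vertex-disjoint blocks (every vertex of $K_v$ lies in exactly one block of the class), such that $r$ classes consist only of copies of $H_1$ and $s$ classes consist only of copies of $H_2$. Here $K_2$ is a single edge and $K_{1,n}$ is the star with $n$ edges. *)

theory Defs
  imports "HOL-Number_Theory.Cong"
begin

text \<open>A block (subgraph) is represented by its edge set; since the graphs H considered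
  (K_2 and stars K_{1,n}) have no isolated vertices, the vertex set of a block is
  the union of its edges.\<close>

definition Kv_edges :: "nat \<Rightarrow> nat set set" where
  "Kv_edges v = {e. \<exists>x y. x < v \<and> y < v \<and> x \<noteq> y \<and> e = {x, y}}"

definition block_verts :: "nat set set \<Rightarrow> nat set" where
  "block_verts B = \<Union> B"

definition is_K2 :: "nat set set \<Rightarrow> bool" where
  "is_K2 B \<longleftrightarrow> (\<exists>x y. x \<noteq> y \<and> B = {{x, y}})"

definition is_star :: "nat \<Rightarrow> nat set set \<Rightarrow> bool" where
  "is_star n B \<longleftrightarrow> (\<exists>c L. finite L \<and> card L = n \<and> c \<notin> L \<and> B = (\<lambda>l. {c, l}) ` L)"

definition res_class :: "(nat set set \<Rightarrow> bool) \<Rightarrow> nat \<Rightarrow> nat set set set \<Rightarrow> bool" where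
  "res_class isH v C \<longleftrightarrow>
     (\<forall>B\<in>C. isH B \<and> B \<subseteq> Kv_edges v) \<and>
     (\<forall>x<v. \<exists>!B. B \<in> C \<and> x \<in> block_verts B)"

definition URD :: "(nat set set \<Rightarrow> bool) \<Rightarrow> (nat set set \<Rightarrow> bool) \<Rightarrow> nat \<Rightarrow> nat \<Rightarrow> nat \<Rightarrow> bool" where
  "URD isH1 isH2 v r s \<longleftrightarrow>
     (\<exists>C :: nat \<Rightarrow> nat set set set.
        (\<forall>i<r. res_class isH1 v (C i)) \<and>
        (\<forall>i. r \<le> i \<and> i < r + s \<longrightarrow> res_class isH2 v (C i)) \<and>
        (\<forall>e\<in>Kv_edges v. \<exists>!p. fst p < r + s \<and> snd p \<in> C (fst p) \<and> e \<in> snd p))"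

end

theory Submission
  imports Defs
begin

lemma Kv_card: "2 * card (Kv_edges v) = v * (v - 1)"
proof -
  have "Kv_edges v = {e. e \<subseteq> {..<v} \<and> card e = 2}"
    unfolding Kv_edges_def card_2_iff by auto
  then have "card (Kv_edges v) = v choose 2"
    by (simp add: n_subsets)
  moreover have "even (v * (v - 1))" by (cases "even v") (auto simp: even_mult_iff)
  ultimately show ?thesis by (metis choose_two dvd_mult_div_cancel)
qed

lemma Kv_fin: "finite (Kv_edges v)"
proof -
  have "Kv_edges v \<subseteq> Pow {..<v}" unfolding Kv_edges_def by auto
  then show ?thesis by (meson finite_Pow_iff finite_lessThan finite_subset)
qed

lemma class_count:
  assumes rc: "res_class isH v C"
    and h: "\<And>B. isH B \<Longrightarrow> card (block_verts B) = a \<and> card B = b"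
  shows "card C * a = v \<and> (\<Sum>B\<in>C. card B) = b * card C \<and> finite C"
proof -
  have sub: "\<And>B. B \<in> C \<Longrightarrow> B \<subseteq> Kv_edges v" and hB: "\<And>B. B \<in> C \<Longrightarrow> isH B"
    using rc unfolding res_class_def by auto
  have uq: "\<And>x. x < v \<Longrightarrow> \<exists>!B. B \<in> C \<and> x \<in> block_verts B"
    using rc unfolding res_class_def by auto
  have finC: "finite C"
    using sub Kv_fin[of v] by (meson PowI finite_Pow_iff finite_subset subsetI)
  have vs: "\<And>B. B \<in> C \<Longrightarrow> block_verts B \<subseteq> {..<v}"
    using sub unfolding block_verts_def Kv_edges_def by blast
  have eq: "{..<v} = (\<Union>B\<in>C. block_verts B)"
  proof
    show "{..<v} \<subseteq> (\<Union>B\<in>C. block_verts B)"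
    proof
      fix x assume "x \<in> {..<v}"
      then obtain B where "B \<in> C" "x \<in> block_verts B" using uq by blast
      then show "x \<in> (\<Union>B\<in>C. block_verts B)" by blast
    qed
    show "(\<Union>B\<in>C. block_verts B) \<subseteq> {..<v}" using vs by blast
  qed
  have dj: "\<forall>B1\<in>C. \<forall>B2\<in>C. B1 \<noteq> B2 \<longrightarrow> block_verts B1 \<inter> block_verts B2 = {}"
  proof (intro ballI impI)
    fix B1 B2 assume "B1 \<in> C" "B2 \<in> C" "B1 \<noteq> B2"
    show "block_verts B1 \<inter> block_verts B2 = {}"
    proof (rule ccontr)
      assume "block_verts B1 \<inter> block_verts B2 \<noteq> {}"
      then obtain x where x: "x \<in> block_verts B1" "x \<in> block_verts B2" by blast
      then have "x < v" using vs \<open>B1 \<in> C\<close> by blast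
      then have "\<exists>!B. B \<in> C \<and> x \<in> block_verts B" by (rule uq)
      then show False using x \<open>B1 \<in> C\<close> \<open>B2 \<in> C\<close> \<open>B1 \<noteq> B2\<close> by blast
    qed
  qed
  have "v = card (\<Union>B\<in>C. block_verts B)" using eq by (metis card_lessThan)
  also have "\<dots> = (\<Sum>B\<in>C. card (block_verts B))"
    by (rule card_UN_disjoint[OF finC _ dj]) (use vs in \<open>meson finite_lessThan finite_subset\<close>)
  also have "\<dots> = (\<Sum>B\<in>C. a)" using h hB by (intro sum.cong) auto
  finally have 1: "card C * a = v" by simp
  have "(\<Sum>B\<in>C. card B) = (\<Sum>B\<in>C. b)" using h hB by (intro sum.cong) auto
  then show ?thesis using 1 finC by simp
qed

lemma K2_props: "is_K2 B \<Longrightarrow> card (block_verts B) = 2 \<and> card B = 1"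
  unfolding is_K2_def block_verts_def by auto

lemma star_props:
  assumes "n \<ge> 1" "is_star n B"
  shows "card (block_verts B) = n + 1 \<and> card B = n"
proof -
  obtain c L where L: "finite L" "card L = n" "c \<notin> L" "B = (\<lambda>l. {c, l}) ` L"
    using assms(2) unfolding is_star_def by blast
  have "L \<noteq> {}" using L assms(1) by auto
  then have "block_verts B = insert c L" unfolding block_verts_def L(4) by auto
  then have 1: "card (block_verts B) = n + 1" using L by simp
  have "inj_on (\<lambda>l. {c, l}) L"
    unfolding inj_on_def using L(3) by (metis doubleton_eq_iff)
  then have "card B = n" using L by (simp add: card_image)
  with 1 show ?thesis by simp
qed

theorem lemma1:
  fixes n v s :: nat
  assumes "n > 1" and "odd n"
    and "v \<ge> 1" and "s \<ge> 1"
    and "URD is_K2 (is_star n) v 1 s"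
  shows "[v = 2 * (n + 1)] (mod n * (n + 1)) \<and>
         (\<forall>k::nat. v = n * (n + 1) * k + 2 * (n + 1) \<longrightarrow>
            2 * s = ((n + 1) * k + 2) * (n + 1))"
proof -
  obtain C where c0: "res_class is_K2 v (C 0)"
    and cs: "\<And>i. 1 \<le> i \<Longrightarrow> i < 1 + s \<Longrightarrow> res_class (is_star n) v (C i)"
    and cov: "\<forall>e\<in>Kv_edges v. \<exists>!p. fst p < 1 + s \<and> snd p \<in> C (fst p) \<and> e \<in> snd p"
    using assms(5) unfolding URD_def by auto
  obtain a0 where a0: "a0 * 2 = v" "(\<Sum>B\<in>C 0. card B) = a0" "finite (C 0)"
    using class_count[OF c0 K2_props] by auto
  define m where "m = card (C 1)"
  have cnt: "\<And>i. 1 \<le> i \<Longrightarrow> i < 1 + s \<Longrightarrow> card (C i) * (n + 1) = v \<and>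
      (\<Sum>B\<in>C i. card B) = n * card (C i) \<and> finite (C i)"
  proof -
    fix i assume "1 \<le> i" "i < 1 + s"
    have "\<And>B. is_star n B \<Longrightarrow> card (block_verts B) = n + 1 \<and> card B = n"
      using star_props assms(1) by simp
    from class_count[OF cs[OF \<open>1 \<le> i\<close> \<open>i < 1 + s\<close>] this]
    show "card (C i) * (n + 1) = v \<and> (\<Sum>B\<in>C i. card B) = n * card (C i) \<and> finite (C i)" .
  qed
  have mv: "m * (n + 1) = v" using cnt[of 1] assms(4) m_def by auto
  have ci: "\<And>i. 1 \<le> i \<Longrightarrow> i < 1 + s \<Longrightarrow> card (C i) = m"
    using cnt mv by (metis add_gr_0 mult_right_cancel zero_less_one less_not_refl2)
  have rcall: "\<And>i. i < 1 + s \<Longrightarrow> \<forall>B\<in>C i. B \<subseteq> Kv_edges v"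
  proof -
    fix i assume "i < 1 + s"
    show "\<forall>B\<in>C i. B \<subseteq> Kv_edges v"
    proof (cases "i = 0")
      case True then show ?thesis using c0 unfolding res_class_def by auto
    next
      case False then show ?thesis using cs[of i] \<open>i < 1 + s\<close> unfolding res_class_def by auto
    qed
  qed
  have finall: "\<And>i. i < 1 + s \<Longrightarrow> finite (C i)"
    using a0(3) cnt by (metis less_one not_less)
  define P where "P = Sigma {..<1 + s} C"
  have finP: "finite P" unfolding P_def using finall by auto
  have KP: "Kv_edges v = (\<Union>p\<in>P. snd p)"
  proof
    show "Kv_edges v \<subseteq> (\<Union>p\<in>P. snd p)"
      using cov unfolding P_def by fastforce
    show "(\<Union>p\<in>P. snd p) \<subseteq> Kv_edges v"
      using rcall unfolding P_def by fastforce
  qed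
  have djP: "\<forall>p\<in>P. \<forall>q\<in>P. p \<noteq> q \<longrightarrow> snd p \<inter> snd q = {}"
  proof (intro ballI impI)
    fix p q assume pq: "p \<in> P" "q \<in> P" "p \<noteq> q"
    show "snd p \<inter> snd q = {}"
    proof (rule ccontr)
      assume "snd p \<inter> snd q \<noteq> {}"
      then obtain e where e: "e \<in> snd p" "e \<in> snd q" by blast
      have "e \<in> Kv_edges v" using KP e pq by blast
      then have "\<exists>!p. fst p < 1 + s \<and> snd p \<in> C (fst p) \<and> e \<in> snd p" using cov by blast
      moreover have "fst p < 1 + s \<and> snd p \<in> C (fst p)" "fst q < 1 + s \<and> snd q \<in> C (fst q)"
        using pq unfolding P_def by auto
      ultimately show False using e pq(3) by blast
    qed
  qed
  have finsnd: "\<forall>p\<in>P. finite (snd p)"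
    using KP Kv_fin[of v] by (metis UN_upper finite_subset)
  have "card (Kv_edges v) = (\<Sum>p\<in>P. card (snd p))"
    unfolding KP by (rule card_UN_disjoint[OF finP finsnd djP])
  also have "\<dots> = (\<Sum>i<1 + s. \<Sum>B\<in>C i. card B)"
    unfolding P_def by (subst sum.Sigma) (auto simp: finall split_def)
  also have "\<dots> = (\<Sum>B\<in>C 0. card B) + (\<Sum>i\<in>{1..<1+s}. \<Sum>B\<in>C i. card B)"
    by (metis (no_types, lifting) One_nat_def lessThan_atLeast0 sum.atLeast_Suc_lessThan zero_less_Suc add_Suc)
  also have "(\<Sum>i\<in>{1..<1+s}. \<Sum>B\<in>C i. card B) = (\<Sum>i\<in>{1..<1+s}. n * m)"
    using cnt ci by (intro sum.cong) auto
  finally have tot: "card (Kv_edges v) = a0 + s * (n * m)" using a0 by simp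
  have "v * (v - 1) = 2 * a0 + 2 * s * n * m" using tot Kv_card[of v] by simp
  then have "v * (v - 1) = v + 2 * s * n * m" using a0 by simp
  then have "v * (v - 2) = 2 * s * n * m" by (simp add: diff_mult_distrib2)
  then have "m * ((n + 1) * (v - 2)) = m * (2 * s * n)" using mv
    by (metis mult.commute mult.left_commute)
  moreover have "m > 0" using mv assms(3) by (metis gr0I mult_0 not_one_le_zero)
  ultimately have key: "(n + 1) * (v - 2) = 2 * s * n" by simp
  have v2: "v \<ge> 2" using a0(1) assms(3) by presburger
  have keyi: "int (n + 1) * (int v - 2) = 2 * int s * int n"
    using key v2 by (metis of_nat_diff of_nat_mult of_nat_numeral)
  have d1: "int n dvd int v - 2 * int (n + 1)"
  proof -
    have "int n dvd int (n + 1) * (int v - 2)" using keyi by simp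
    moreover have "coprime n (n + 1)" by simp
    then have "coprime (int n) (int (n + 1))" by (simp only: coprime_int_iff)
    ultimately have "int n dvd int v - 2" using coprime_dvd_mult_right_iff by blast
    moreover have "int n dvd 2 * int n" by simp
    ultimately have "int n dvd (int v - 2) - 2 * int n" by (rule dvd_diff)
    then show ?thesis by (simp add: algebra_simps)
  qed
  have d2: "int (n + 1) dvd int v - 2 * int (n + 1)"
    using mv by (metis dvd_diff dvd_triv_left dvd_triv_right of_nat_mult)
  have "int n * int (n + 1) dvd int v - 2 * int (n + 1)"
    by (rule divides_mult[OF d1 d2]) (simp only: coprime_int_iff, simp)
  then have p1: "[v = 2 * (n + 1)] (mod n * (n + 1))"
    by (metis cong_iff_dvd_diff cong_int_iff of_nat_mult of_nat_numeral)
  have p2: "\<forall>k::nat. v = n * (n + 1) * k + 2 * (n + 1) \<longrightarrow>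
            2 * s = ((n + 1) * k + 2) * (n + 1)"
  proof (intro allI impI)
    fix k assume vk: "v = n * (n + 1) * k + 2 * (n + 1)"
    then have "v - 2 = n * ((n + 1) * k + 2)" by (simp add: algebra_simps)
    then have "n * (((n + 1) * k + 2) * (n + 1)) = n * (2 * s)" using key
      by (metis mult.commute mult.left_commute)
    then show "2 * s = ((n + 1) * k + 2) * (n + 1)" using assms(1)
      by (metis mult_left_cancel not_one_less_zero gr_implies_not0)
  qed
  show ?thesis using p1 p2 by blast
qed

end
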